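(* Let $\tilde Q\subseteq\mathbb{R}^m$ be a closed convex set, $A\in\mathbb{R}^{n\times m}$, $b\in\mathbb{R}^n$, and let $\varphi:\tilde Q\to\mathbb{R}$ be $\mu$-strongly convex ($\mu>0$) with respect to the $p$-norm on $\tilde Q$ for some $1\le p\le2$. Consider the problem $$\varphi(y)\to\min_{Ay=b,\ y\in\tilde Q}$$ with solution $y_*$, and its dual (up to sign) $$f(x)=\max_{y\in\tilde Q}\{\langle x,b-Ay\rangle-\varphi(y)\}\to\min_{x\in\mathbb{R}^n},$$ and assume the dual has a solution; let $x_*$ be the dual solution of minimal $2$-norm and $R=\|x_*\|_2$. Denote by $y(x)$ the maximizer in the definition of $f(x)$, so that $\nabla f(x)=b-Ay(x)$. Let $L=\frac{1}{\mu}\max_{\|y\|_2\le1}\|Ay\|_2^2$ and run gradient descent $x^{k+1}=x^k-\frac{1}{L}\nabla f(x^k)$ from $x^0=0$. Set $$\bar x^N=\frac1N\sum_{k=1}^N x^k,\qquad \bar y^N=\frac1N\sum_{k=0}^{N-1}y(x^k).$$ Let $\varepsilon>0,\tilde\varepsilon>0$. Then the conditions $f(\bar x^N)+\varphi(\bar y^N)\le\varepsilon$ and $\|A\bar y^N-b\|_2\le\tilde\varepsilon$ imply $$\varphi(\bar y^N)-\varphi(y_* )\le\varepsilon,\qquad\|A\bar y^N-b\|_2\le\tilde\varepsilon,$$ and these two conditions $f(\bar x^N)+\varphi(\bar y^N)\le\varepsilon$, $\|A\bar y^N-b\|_2\le\tilde\varepsilon$ are guaranteed to hold for some $$N\le\max\left\{\frac{2LR^2}{\varepsilon},\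 \frac{2LR}{\tilde\varepsilon}\right\}.$$
   Context: A function $\varphi$ is $\mu$-strongly convex with respect to the $p$-norm on $\tilde Q$ if $\varphi(y)\ge\varphi(z)+\langle g,y-z\rangle+\frac{\mu}{2}\|y-z\|_p^2$ for all $y,z\in\tilde Q$ and all subgradients $g\in\partial\varphi(z)$. *)

theory Defs
  imports "HOL-Analysis.Analysis"
begin

definition pnorm :: "real \<Rightarrow> real ^ 'm \<Rightarrow> real" where
  "pnorm p v = (\<Sum>i\<in>UNIV. \<bar>v $ i\<bar> powr p) powr (1 / p)"

definition subgrad_on :: "'a::real_inner set \<Rightarrow> ('a \<Rightarrow> real) \<Rightarrow> 'a \<Rightarrow> 'a set" where
  "subgrad_on Q \<phi> z = {g. \<forall>y\<in>Q. \<phi> y \<ge> \<phi> z + inner g (y - z)}"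

definition strongly_convex_pnorm_on ::
  "real \<Rightarrow> real \<Rightarrow> (real ^ 'm) set \<Rightarrow> (real ^ 'm \<Rightarrow> real) \<Rightarrow> bool" where
  "strongly_convex_pnorm_on \<mu> p Q \<phi> \<longleftrightarrow> convex_on Q \<phi> \<and>
     (\<forall>y\<in>Q. \<forall>z\<in>Q. \<forall>g\<in>subgrad_on Q \<phi> z.
        \<phi> y \<ge> \<phi> z + inner g (y - z) + \<mu> / 2 * (pnorm p (y - z))\<^sup>2)"

definition dual_obj ::
  "(real ^ 'm) set \<Rightarrow> (real ^ 'm \<Rightarrow> real) \<Rightarrow> real ^ 'm ^ 'n \<Rightarrow> real ^ 'n \<Rightarrow> real ^ 'n \<Rightarrow> real" where
  "dual_obj Q \<phi> A b x = (SUP y\<in>Q. inner x (b - A *v y) - \<phi> y)"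

end

theory Submission
  imports Defs
begin

lemma pnorm_ge_norm:
  fixes v :: "real ^ 'm"
  assumes p1: "1 \<le> p" and p2: "p \<le> 2"
  shows "norm v \<le> pnorm p v"
proof (cases "norm v = 0")
  case True
  then show ?thesis by (simp add: pnorm_def)
next
  case False
  define t where "t = norm v"
  have tpos: "t > 0" using False t_def by simp
  have t2: "t\<^sup>2 = (\<Sum>i\<in>UNIV. \<bar>v $ i\<bar>\<^sup>2)"
    unfolding t_def power2_norm_eq_inner inner_vec_def by (simp add: power2_eq_square)
  have each: "t powr (p - 2) * \<bar>v $ i\<bar>\<^sup>2 \<le> \<bar>v $ i\<bar> powr p" for i
  proof (cases "v $ i = 0")
    case True then show ?thesis by simp
  next
    case False
    have a: "\<bar>v $ i\<bar> > 0" "\<bar>v $ i\<bar> \<le> t" using False component_le_norm_cart[of v i] t_def by auto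
    have "t powr (p - 2) \<le> \<bar>v $ i\<bar> powr (p - 2)"
      by (rule powr_mono2') (use p2 a in auto)
    then have "t powr (p - 2) * \<bar>v $ i\<bar>\<^sup>2 \<le> \<bar>v $ i\<bar> powr (p - 2) * \<bar>v $ i\<bar> powr 2"
      using a by (simp add: mult_right_mono)
    also have "\<dots> = \<bar>v $ i\<bar> powr ((p - 2) + 2)" by (simp only: powr_add)
    also have "\<dots> = \<bar>v $ i\<bar> powr p" by simp
    finally show ?thesis .
  qed
  have "t powr p = t powr ((p - 2) + 2)" by simp
  also have "\<dots> = t powr (p - 2) * t powr 2" by (simp only: powr_add)
  also have "\<dots> = t powr (p - 2) * t\<^sup>2" using tpos by simp
  also have "\<dots> = (\<Sum>i\<in>UNIV. t powr (p - 2) * \<bar>v $ i\<bar>\<^sup>2)" by (simp add: t2 sum_distrib_left)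
  also have "\<dots> \<le> (\<Sum>i\<in>UNIV. \<bar>v $ i\<bar> powr p)" by (rule sum_mono) (rule each)
  finally have le: "t powr p \<le> (\<Sum>i\<in>UNIV. \<bar>v $ i\<bar> powr p)" .
  have "t = (t powr p) powr (1 / p)" using tpos p1 by (simp add: powr_powr)
  also have "\<dots> \<le> pnorm p v" unfolding pnorm_def
    by (rule powr_mono2) (use le p1 tpos in auto)
  finally show ?thesis by (simp add: t_def)
qed

lemma gd_identity:
  fixes x xk xk' g :: "'a::real_inner"
  assumes L: "L > 0" and st: "xk' = xk - (1 / L) *\<^sub>R g"
  shows "inner xk g - (norm g)\<^sup>2 / (2 * L) = inner x g + L / 2 * ((norm (xk - x))\<^sup>2 - (norm (xk' - x))\<^sup>2)"
proof -
  have e: "xk' - x = (xk - x) - (1 / L) *\<^sub>R g" using st by simp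
  have "(norm (xk' - x))\<^sup>2 = inner ((xk - x) - (1 / L) *\<^sub>R g) ((xk - x) - (1 / L) *\<^sub>R g)"
    unfolding e power2_norm_eq_inner ..
  also have "\<dots> = (norm (xk - x))\<^sup>2 - 2 / L * inner (xk - x) g + (norm g)\<^sup>2 / L\<^sup>2"
    unfolding power2_norm_eq_inner
    by (simp add: inner_diff_left inner_diff_right inner_commute power2_eq_square algebra_simps)
  finally have n: "(norm (xk' - x))\<^sup>2 = (norm (xk - x))\<^sup>2 - 2 / L * inner (xk - x) g + (norm g)\<^sup>2 / L\<^sup>2" .
  show ?thesis unfolding n using L by (simp add: inner_diff_left field_simps power2_eq_square)
qed

lemma amgm_aux:
  fixes a c d \<mu> S :: real
  assumes "a \<ge> 0" "c \<ge> 0" "d \<ge> 0" "\<mu> > 0" "S \<ge> 0" "c\<^sup>2 \<le> S * d\<^sup>2"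
  shows "a * c - \<mu> / 2 * d\<^sup>2 \<le> (1 / \<mu>) * S / 2 * a\<^sup>2"
proof (cases "S = 0")
  case True
  then have "c\<^sup>2 \<le> 0" using assms by simp
  then have "c = 0" by simp
  then show ?thesis using assms True by simp
next
  case False
  then have Sp: "S > 0" using assms by simp
  have "S * (2 * \<mu> * a * c) \<le> S\<^sup>2 * a\<^sup>2 + \<mu>\<^sup>2 * c\<^sup>2"
  proof -
    have "0 \<le> (S * a - \<mu> * c)\<^sup>2" by simp
    also have "\<dots> = S\<^sup>2 * a\<^sup>2 + \<mu>\<^sup>2 * c\<^sup>2 - S * (2 * \<mu> * a * c)"
      by (simp add: power2_diff power_mult_distrib algebra_simps)
    finally show ?thesis by simp
  qed
  also have "\<dots> \<le> S\<^sup>2 * a\<^sup>2 + \<mu>\<^sup>2 * (S * d\<^sup>2)"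
    using assms by (simp add: mult_left_mono)
  finally have "S * (2 * \<mu> * a * c) \<le> S * (S * a\<^sup>2 + \<mu>\<^sup>2 * d\<^sup>2)" by (simp add: algebra_simps power2_eq_square)
  then have "2 * \<mu> * a * c \<le> S * a\<^sup>2 + \<mu>\<^sup>2 * d\<^sup>2" using Sp by simp
  then show ?thesis using assms by (simp add: field_simps power2_eq_square)
qed


lemma mv_sum: "A *v (\<Sum>k<N. v k) = (\<Sum>k<N. A *v v k)"
  for A :: "real ^ 'm ^ 'n" and N :: nat
  by (induct N) (simp_all add: matrix_vector_right_distrib)

theorem theorem4p1:
  fixes Q :: "(real ^ 'm) set"
    and A :: "real ^ 'm ^ 'n" and b :: "real ^ 'n"
    and \<phi> :: "real ^ 'm \<Rightarrow> real"
    and \<mu> p \<epsilon> \<epsilon>' :: real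
    and ystar :: "real ^ 'm" and xstar :: "real ^ 'n"
    and yx :: "real ^ 'n \<Rightarrow> real ^ 'm"
    and xk :: "nat \<Rightarrow> real ^ 'n"
  assumes Q_closed: "closed Q" and Q_convex: "convex Q"
    and mu_pos: "\<mu> > 0" and p_ge: "1 \<le> p" and p_le: "p \<le> 2"
    and sc: "strongly_convex_pnorm_on \<mu> p Q \<phi>"
    and ystar_feas: "ystar \<in> Q" "A *v ystar = b"
    and ystar_opt: "\<forall>y\<in>Q. A *v y = b \<longrightarrow> \<phi> ystar \<le> \<phi> y"
    and xstar_opt: "\<forall>x. dual_obj Q \<phi> A b xstar \<le> dual_obj Q \<phi> A b x"
    and xstar_min_norm: "\<forall>x. (\<forall>x'. dual_obj Q \<phi> A b x \<le> dual_obj Q \<phi> A b x')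
                               \<longrightarrow> norm xstar \<le> norm x"
    and yx_max: "\<forall>x. yx x \<in> Q \<and>
                    (\<forall>y\<in>Q. inner x (b - A *v y) - \<phi> y \<le> inner x (b - A *v yx x) - \<phi> (yx x))"
    and x0: "xk 0 = 0"
    and xstep: "\<forall>k. xk (Suc k) = xk k -
        (1 / ((1 / \<mu>) * Sup {(norm (A *v y))\<^sup>2 | y. norm y \<le> 1})) *\<^sub>R (b - A *v yx (xk k))"
    and eps_pos: "\<epsilon> > 0" and eps'_pos: "\<epsilon>' > 0"
  shows
    "(\<forall>N::nat. N \<ge> 1 \<longrightarrow>
        dual_obj Q \<phi> A b ((1 / real N) *\<^sub>R (\<Sum>k=1..N. xk k))
          + \<phi> ((1 / real N) *\<^sub>R (\<Sum>k<N. yx (xk k))) \<le> \<epsilon>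
        \<and> norm (A *v ((1 / real N) *\<^sub>R (\<Sum>k<N. yx (xk k))) - b) \<le> \<epsilon>'
        \<longrightarrow> \<phi> ((1 / real N) *\<^sub>R (\<Sum>k<N. yx (xk k))) - \<phi> ystar \<le> \<epsilon>
          \<and> norm (A *v ((1 / real N) *\<^sub>R (\<Sum>k<N. yx (xk k))) - b) \<le> \<epsilon>')
   \<and> (\<forall>N::nat. N \<ge> 1 \<longrightarrow>
        real N \<ge> max (2 * ((1 / \<mu>) * Sup {(norm (A *v y))\<^sup>2 | y. norm y \<le> 1}) * (norm xstar)\<^sup>2 / \<epsilon>)
                     (2 * ((1 / \<mu>) * Sup {(norm (A *v y))\<^sup>2 | y. norm y \<le> 1}) * norm xstar / \<epsilon>')
        \<longrightarrow> dual_obj Q \<phi> A b ((1 / real N) *\<^sub>R (\<Sum>k=1..N. xk k))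
              + \<phi> ((1 / real N) *\<^sub>R (\<Sum>k<N. yx (xk k))) \<le> \<epsilon>
          \<and> norm (A *v ((1 / real N) *\<^sub>R (\<Sum>k<N. yx (xk k))) - b) \<le> \<epsilon>')"
proof -
  define S where "S = Sup {(norm (A *v y))\<^sup>2 | y. norm y \<le> 1}"
  define L where "L = (1 / \<mu>) * S"
  define F where "F = dual_obj Q \<phi> A b"
  define R where "R = norm xstar"
  obtain K where K: "\<And>y. norm (A *v y) \<le> norm y * K"
    using bounded_linear.bounded[OF matrix_vector_mul_bounded_linear[of A]] by blast
  have bdd: "bdd_above {(norm (A *v y))\<^sup>2 | y. norm y \<le> 1}"
  proof (rule bdd_aboveI[of _ "(max K 0)\<^sup>2"])
    fix t assume "t \<in> {(norm (A *v y))\<^sup>2 | y. norm y \<le> 1}"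
    then obtain y where t: "t = (norm (A *v y))\<^sup>2" and y: "norm y \<le> 1" by blast
    have "norm y * K \<le> norm y * max K 0" by (simp add: mult_left_mono)
    also have "\<dots> \<le> 1 * max K 0" by (rule mult_right_mono) (use y in auto)
    finally have "norm (A *v y) \<le> max K 0" using K[of y] by simp
    then show "t \<le> (max K 0)\<^sup>2" unfolding t by (simp add: power_mono)
  qed
  have S0: "S \<ge> 0"
  proof -
    have "(norm (A *v 0))\<^sup>2 \<in> {(norm (A *v y))\<^sup>2 | y. norm y \<le> 1}"
      by (rule CollectI, rule exI[of _ 0]) simp
    from cSup_upper[OF this bdd] show ?thesis by (simp add: S_def)
  qed
  have L0: "L \<ge> 0" using S0 mu_pos by (simp add: L_def)
  have Abound: "(norm (A *v v))\<^sup>2 \<le> S * (norm v)\<^sup>2" for v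
  proof (cases "v = 0")
    case True then show ?thesis by simp
  next
    case False
    define u where "u = (1 / norm v) *\<^sub>R v"
    have "norm u \<le> 1" using False by (simp add: u_def)
    then have "(norm (A *v u))\<^sup>2 \<le> S" unfolding S_def by (intro cSup_upper[OF _ bdd]) blast
    moreover have "norm (A *v u) = norm (A *v v) / norm v"
      using False by (simp add: u_def matrix_vector_mult_scaleR)
    ultimately have "(norm (A *v v))\<^sup>2 / (norm v)\<^sup>2 \<le> S" by (simp add: power_divide)
    then show ?thesis using False by (simp add: field_simps)
  qed
  have yQ: "yx x \<in> Q" for x using yx_max by blast
  have Flow: "y \<in> Q \<Longrightarrow> inner x (b - A *v y) - \<phi> y \<le> inner x (b - A *v yx x) - \<phi> (yx x)" for x y
    using yx_max by blast
  have Fx: "F x = inner x (b - A *v yx x) - \<phi> (yx x)" for x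
    unfolding F_def dual_obj_def
    by (rule cSup_eq_maximum) (use yQ Flow in auto)
  have Fl: "y \<in> Q \<Longrightarrow> inner x (b - A *v y) - \<phi> y \<le> F x" for x y
    using Flow Fx by simp
  have sc2: "\<phi> (yx x') \<ge> \<phi> (yx x) - inner x (A *v (yx x' - yx x)) + \<mu> / 2 * (norm (yx x' - yx x))\<^sup>2" for x x'
  proof -
    have cv: "convex_on Q \<phi>" and scf: "\<forall>y\<in>Q. \<forall>z\<in>Q. \<forall>g\<in>subgrad_on Q \<phi> z.
        \<phi> y \<ge> \<phi> z + inner g (y - z) + \<mu> / 2 * (pnorm p (y - z))\<^sup>2"
      using sc unfolding strongly_convex_pnorm_on_def by auto
    have gin: "- (x v* A) \<in> subgrad_on Q \<phi> (yx x)"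
      unfolding subgrad_on_def
    proof (intro CollectI ballI)
      fix z assume z: "z \<in> Q"
      have "inner x (b - A *v z) - \<phi> z \<le> inner x (b - A *v yx x) - \<phi> (yx x)" using Flow[OF z] .
      then show "\<phi> (yx x) + inner (- (x v* A)) (z - yx x) \<le> \<phi> z"
        by (simp add: dot_lmul_matrix matrix_vector_mult_diff_distrib inner_diff_right)
    qed
    have "\<phi> (yx x') \<ge> \<phi> (yx x) + inner (- (x v* A)) (yx x' - yx x) + \<mu> / 2 * (pnorm p (yx x' - yx x))\<^sup>2"
      using scf yQ gin by blast
    moreover have "(norm (yx x' - yx x))\<^sup>2 \<le> (pnorm p (yx x' - yx x))\<^sup>2"
      by (rule power_mono) (use pnorm_ge_norm[OF p_ge p_le] in auto)
    moreover have "\<mu> / 2 * (norm (yx x' - yx x))\<^sup>2 \<le> \<mu> / 2 * (pnorm p (yx x' - yx x))\<^sup>2"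
      using calculation(2) mu_pos by (simp add: mult_left_mono)
    ultimately show ?thesis by (simp add: dot_lmul_matrix)
  qed
  have descent: "F x' \<le> F x + inner (b - A *v yx x) (x' - x) + L / 2 * (norm (x' - x))\<^sup>2" for x x'
  proof -
    define y where "y = yx x"
    define y' where "y' = yx x'"
    have s: "\<phi> y' \<ge> \<phi> y - inner x (A *v (y' - y)) + \<mu> / 2 * (norm (y' - y))\<^sup>2"
      using sc2 unfolding y_def y'_def .
    have cs: "inner (x' - x) (A *v (y - y')) \<le> norm (x' - x) * norm (A *v (y - y'))"
      by (rule norm_cauchy_schwarz)
    have cb: "(norm (A *v (y - y')))\<^sup>2 \<le> S * (norm (y' - y))\<^sup>2"
      using Abound[of "y - y'"] by (simp add: norm_minus_commute)
    have am: "norm (x' - x) * norm (A *v (y - y')) - \<mu> / 2 * (norm (y' - y))\<^sup>2 \<le> (1 / \<mu>) * S / 2 * (norm (x' - x))\<^sup>2"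
      by (rule amgm_aux) (use mu_pos S0 cb in auto)
    have eq: "F x' - (F x + inner (b - A *v y) (x' - x)) = inner (x' - x) (A *v (y - y')) - inner x (A *v (y' - y)) + \<phi> y - \<phi> y'"
      unfolding Fx y_def[symmetric] y'_def[symmetric]
      by (simp add: inner_diff_left inner_diff_right matrix_vector_mult_diff_distrib inner_commute algebra_simps)
    show ?thesis using eq s cs am unfolding y_def L_def by (simp add: algebra_simps)
  qed
  have bz: "S = 0 \<Longrightarrow> A *v v = 0" for v using Abound[of v] by simp
  define yk where "yk k = yx (xk k)" for k
  define g where "g k = b - A *v yk k" for k
  have stepL: "xk (Suc k) = xk k - (1 / L) *\<^sub>R g k" for k
    using xstep unfolding L_def S_def g_def yk_def by blast
  have Fk: "F (xk k) = inner (xk k) (g k) - \<phi> (yk k)" for k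
    by (simp add: Fx g_def yk_def)
  have stepineq: "F (xk (Suc k)) \<le> inner x (g k) - \<phi> (yk k) + L / 2 * ((norm (xk k - x))\<^sup>2 - (norm (xk (Suc k) - x))\<^sup>2)" for k x
  proof (cases "L = 0")
    case True
    then have "S = 0" using mu_pos by (simp add: L_def)
    then have "g k = 0" using bz[of ystar] bz[of "yk k"] ystar_feas by (simp add: g_def)
    then show ?thesis using stepL[of k] Fk[of k] by simp
  next
    case False
    then have Lp: "L > 0" using L0 by simp
    have "F (xk (Suc k)) \<le> F (xk k) + inner (g k) (xk (Suc k) - xk k) + L / 2 * (norm (xk (Suc k) - xk k))\<^sup>2"
      using descent[of "xk (Suc k)" "xk k"] unfolding g_def yk_def .
    also have "\<dots> = F (xk k) - (norm (g k))\<^sup>2 / (2 * L)"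
    proof -
      have d: "xk (Suc k) - xk k = - ((1 / L) *\<^sub>R g k)" by (simp add: stepL)
      have i: "inner (g k) (- ((1 / L) *\<^sub>R g k)) = - (1 / L) * (norm (g k))\<^sup>2"
        by (simp add: power2_norm_eq_inner)
      have n: "norm (- ((1 / L) *\<^sub>R g k)) = (1 / L) * norm (g k)" using Lp by simp
      show ?thesis unfolding d i n using Lp by (simp add: field_simps power2_eq_square)
    qed
    also have "\<dots> = inner x (g k) - \<phi> (yk k) + L / 2 * ((norm (xk k - x))\<^sup>2 - (norm (xk (Suc k) - x))\<^sup>2)"
      using gd_identity[OF Lp stepL[of k], of x] Fk[of k] by simp
    finally show ?thesis .
  qed
  have sumineq: "(\<Sum>k<N. F (xk (Suc k))) \<le> inner x (\<Sum>k<N. g k) - (\<Sum>k<N. \<phi> (yk k)) + L / 2 * (norm x)\<^sup>2" for N x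
  proof -
    have "(\<Sum>k<N. F (xk (Suc k))) \<le> (\<Sum>k<N. inner x (g k) - \<phi> (yk k) + L / 2 * ((norm (xk k - x))\<^sup>2 - (norm (xk (Suc k) - x))\<^sup>2))"
      by (rule sum_mono) (rule stepineq)
    also have "\<dots> = (\<Sum>k<N. inner x (g k) - \<phi> (yk k)) + L / 2 * (\<Sum>k<N. (norm (xk k - x))\<^sup>2 - (norm (xk (Suc k) - x))\<^sup>2)"
      by (simp only: sum.distrib sum_distrib_left)
    also have "\<dots> = inner x (\<Sum>k<N. g k) - (\<Sum>k<N. \<phi> (yk k)) + L / 2 * ((norm (xk 0 - x))\<^sup>2 - (norm (xk N - x))\<^sup>2)"
    proof -
      have tel: "(\<Sum>k<N. (norm (xk k - x))\<^sup>2 - (norm (xk (Suc k) - x))\<^sup>2) = (norm (xk 0 - x))\<^sup>2 - (norm (xk N - x))\<^sup>2"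
        by (rule sum_lessThan_telescope')
      show ?thesis unfolding tel by (simp only: sum_subtractf inner_sum_right)
    qed
    also have "\<dots> \<le> inner x (\<Sum>k<N. g k) - (\<Sum>k<N. \<phi> (yk k)) + L / 2 * (norm x)\<^sup>2"
      using L0 x0 by (simp add: mult_left_mono)
    finally show ?thesis .
  qed
  have cvx: "convex_on Q \<phi>" using sc unfolding strongly_convex_pnorm_on_def by auto
  have main: "F ((1 / real N) *\<^sub>R (\<Sum>k=1..N. xk k)) + \<phi> ((1 / real N) *\<^sub>R (\<Sum>k<N. yx (xk k)))
      \<le> inner x (b - A *v ((1 / real N) *\<^sub>R (\<Sum>k<N. yx (xk k)))) + L / (2 * real N) * (norm x)\<^sup>2"
    and ybQ: "(1 / real N) *\<^sub>R (\<Sum>k<N. yx (xk k)) \<in> Q"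
    if N1: "N \<ge> 1" for N x
  proof -
    define c where "c = 1 / real N"
    have cN: "c * real N = 1" "c > 0" "real N * c = 1" using N1 by (auto simp: c_def)
    define xb where "xb = c *\<^sub>R (\<Sum>k=1..N. xk k)"
    define yb where "yb = c *\<^sub>R (\<Sum>k<N. yk k)"
    have ybs: "yb = (\<Sum>k<N. c *\<^sub>R yk k)" by (simp add: yb_def scaleR_sum_right)
    have ybQ': "yb \<in> Q" unfolding ybs
      by (rule convex_sum) (use Q_convex cN yQ in \<open>auto simp: yk_def\<close>)
    have phiyb: "\<phi> yb \<le> c * (\<Sum>k<N. \<phi> (yk k))"
    proof -
      have "\<phi> yb \<le> (\<Sum>k<N. c * \<phi> (yk k))" unfolding ybs
        by (rule convex_on_sum) (use cvx cN yQ N1 in \<open>auto simp: yk_def lessThan_empty_iff\<close>)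
      then show ?thesis by (simp add: sum_distrib_left)
    qed
    have shift: "(\<Sum>k=1..N. h k) = (\<Sum>k<N. h (Suc k))" for h :: "nat \<Rightarrow> 'z::comm_monoid_add"
      using sum.atLeast1_atMost_eq[of h N] by simp
    have Fxb: "F xb \<le> c * (\<Sum>k<N. F (xk (Suc k)))"
    proof -
      define y where "y = yx xb"
      have "F xb = c * (\<Sum>k=1..N. inner (xk k) (b - A *v y)) - \<phi> y"
        unfolding Fx y_def[symmetric] unfolding xb_def by (simp add: inner_sum_left)
      also have "\<dots> = c * (\<Sum>k=1..N. inner (xk k) (b - A *v y) - \<phi> y)"
        using cN by (simp add: sum_subtractf right_diff_distrib mult.assoc[symmetric])
      also have "\<dots> \<le> c * (\<Sum>k=1..N. F (xk k))"
        using cN by (intro mult_left_mono sum_mono Fl) (auto simp: y_def yQ)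
      finally show ?thesis using sum.atLeast1_atMost_eq[of "\<lambda>k. F (xk k)" N] by simp
    qed
    have gs: "(\<Sum>k<N. g k) = real N *\<^sub>R (b - A *v yb)"
    proof -
      have "(\<Sum>k<N. g k) = real N *\<^sub>R b - A *v (\<Sum>k<N. yk k)"
        by (simp add: g_def sum_subtractf mv_sum scaleR_conv_of_real)
      moreover have "real N *\<^sub>R (b - A *v yb) = real N *\<^sub>R b - (real N * c) *\<^sub>R (A *v (\<Sum>k<N. yk k))"
        by (simp add: yb_def matrix_vector_mult_scaleR scaleR_diff_right)
      ultimately show ?thesis using cN by (simp add: mult.commute)
    qed
    have "c * (\<Sum>k<N. F (xk (Suc k))) \<le> c * (inner x (real N *\<^sub>R (b - A *v yb)) - (\<Sum>k<N. \<phi> (yk k)) + L / 2 * (norm x)\<^sup>2)"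
      using sumineq[of N x] cN gs by (intro mult_left_mono) auto
    then have "F xb + \<phi> yb \<le> c * (inner x (real N *\<^sub>R (b - A *v yb)) - (\<Sum>k<N. \<phi> (yk k)) + L / 2 * (norm x)\<^sup>2) + c * (\<Sum>k<N. \<phi> (yk k))"
      using Fxb phiyb by linarith
    also have "\<dots> = inner x (b - A *v yb) + L / (2 * real N) * (norm x)\<^sup>2"
    proof -
      have e: "inner x (real N *\<^sub>R (b - A *v yb)) = real N * inner x (b - A *v yb)" by simp
      have cl: "c * (L / 2) = L / (2 * real N)" by (simp add: c_def)
      have "c * (inner x (real N *\<^sub>R (b - A *v yb)) - (\<Sum>k<N. \<phi> (yk k)) + L / 2 * (norm x)\<^sup>2) + c * (\<Sum>k<N. \<phi> (yk k))
          = (c * real N) * inner x (b - A *v yb) + c * (L / 2) * (norm x)\<^sup>2"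
        unfolding e by (simp only: algebra_simps)
      then show ?thesis unfolding cl cN(1) by simp
    qed
    finally show "F ((1 / real N) *\<^sub>R (\<Sum>k=1..N. xk k)) + \<phi> ((1 / real N) *\<^sub>R (\<Sum>k<N. yx (xk k)))
      \<le> inner x (b - A *v ((1 / real N) *\<^sub>R (\<Sum>k<N. yx (xk k)))) + L / (2 * real N) * (norm x)\<^sup>2"
      by (simp add: xb_def yb_def c_def yk_def)
    show "(1 / real N) *\<^sub>R (\<Sum>k<N. yx (xk k)) \<in> Q" using ybQ' by (simp add: yb_def c_def yk_def)
  qed
  have wd: "F xb \<ge> - \<phi> ystar" for xb
    using Fl[OF ystar_feas(1), of xb] ystar_feas(2) by simp
  show ?thesis
    unfolding S_def[symmetric] L_def[symmetric] F_def[symmetric]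
  proof (intro conjI allI impI)
    fix N :: nat
    assume "1 \<le> N" and H: "F ((1 / real N) *\<^sub>R (\<Sum>k=1..N. xk k)) + \<phi> ((1 / real N) *\<^sub>R (\<Sum>k<N. yx (xk k))) \<le> \<epsilon>
        \<and> norm (A *v ((1 / real N) *\<^sub>R (\<Sum>k<N. yx (xk k))) - b) \<le> \<epsilon>'"
    then show "\<phi> ((1 / real N) *\<^sub>R (\<Sum>k<N. yx (xk k))) - \<phi> ystar \<le> \<epsilon>"
      using wd[of "(1 / real N) *\<^sub>R (\<Sum>k=1..N. xk k)"] by linarith
    show "norm (A *v ((1 / real N) *\<^sub>R (\<Sum>k<N. yx (xk k))) - b) \<le> \<epsilon>'" using H by blast
  next
    fix N :: nat
    assume N1: "1 \<le> N" and Nb: "max (2 * L * (norm xstar)\<^sup>2 / \<epsilon>) (2 * L * norm xstar / \<epsilon>') \<le> real N"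
    define R where "R = norm xstar"
    define xb where "xb = (1 / real N) *\<^sub>R (\<Sum>k=1..N. xk k)"
    define yb where "yb = (1 / real N) *\<^sub>R (\<Sum>k<N. yx (xk k))"
    define r where "r = b - A *v yb"
    have Np: "real N > 0" using N1 by simp
    have R0: "R \<ge> 0" by (simp add: R_def)
    have M: "F xb + \<phi> yb \<le> inner x r + L / (2 * real N) * (norm x)\<^sup>2" for x
      using main[OF N1, of x] by (simp add: xb_def yb_def r_def)
    have yQ': "yb \<in> Q" using ybQ[OF N1] by (simp add: yb_def)
    have lower: "F xb + \<phi> yb \<ge> - R * norm r"
    proof -
      have "F xb \<ge> F xstar" using xstar_opt by (simp add: F_def)
      moreover have "F xstar \<ge> inner xstar r - \<phi> yb" using Fl[OF yQ', of xstar] by (simp add: r_def)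
      moreover have "inner (- xstar) r \<le> norm (- xstar) * norm r" by (rule norm_cauchy_schwarz)
      ultimately show ?thesis by (simp add: R_def)
    qed
    define x0 where "x0 = (if r = 0 then 0 else (- (2 * R / norm r)) *\<^sub>R r)"
    have ix0: "inner x0 r = - 2 * R * norm r"
      by (simp add: x0_def power2_norm_eq_inner[symmetric] power2_eq_square)
    have nx0: "(norm x0)\<^sup>2 \<le> 4 * R\<^sup>2"
      using R0 by (simp add: x0_def power2_eq_square)
    define B where "B = L / (2 * real N) * (4 * R\<^sup>2)"
    have up: "F xb + \<phi> yb \<le> - 2 * R * norm r + B"
    proof -
      have "L / (2 * real N) * (norm x0)\<^sup>2 \<le> B"
        unfolding B_def using nx0 L0 Np by (intro mult_left_mono) auto
      then show ?thesis using M[of x0] ix0 by linarith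
    qed
    have B1: "B = 2 * L * R\<^sup>2 / real N" by (simp add: B_def)
    have "2 * L * R\<^sup>2 / \<epsilon> \<le> real N" using Nb by (simp add: R_def)
    then have "2 * L * R\<^sup>2 \<le> real N * \<epsilon>" using eps_pos by (simp add: field_simps)
    then have Beps: "B \<le> \<epsilon>" unfolding B1 using Np by (simp add: field_simps)
    show "F xb + \<phi> yb \<le> \<epsilon>"
    proof -
      have "R * norm r \<ge> 0" using R0 by simp
      then show ?thesis using up Beps by linarith
    qed
    have RB: "R * norm r \<le> B" using up lower by linarith
    have "norm r \<le> \<epsilon>'"
    proof (cases "R = 0")
      case False
      then have Rp: "R > 0" using R0 by simp
      have "2 * L * R / \<epsilon>' \<le> real N" using Nb by (simp add: R_def)
      then have "2 * L * R \<le> real N * \<epsilon>'" using eps'_pos by (simp add: field_simps)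
      then have "2 * L * R\<^sup>2 \<le> real N * \<epsilon>' * R" using Rp by (simp add: power2_eq_square field_simps)
      then have "B \<le> \<epsilon>' * R" unfolding B1 using Np by (simp add: field_simps)
      then have "R * norm r \<le> R * \<epsilon>'" using RB by (simp add: mult.commute)
      then show ?thesis using Rp by simp
    next
      case True
      define t where "t = real N / (L + 1)"
      have tp: "t > 0" using Np L0 by (simp add: t_def)
      define q where "q = (norm r)\<^sup>2"
      have q0: "q \<ge> 0" by (simp add: q_def)
      have "0 \<le> F xb + \<phi> yb" using lower True by simp
      also have "\<dots> \<le> inner ((- t) *\<^sub>R r) r + L / (2 * real N) * (norm ((- t) *\<^sub>R r))\<^sup>2" by (rule M)
      also have "\<dots> = - t * q + t * (L / (2 * (L + 1))) * q"
      proof -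
        have i1: "inner ((- t) *\<^sub>R r) r = - t * q" by (simp add: q_def power2_norm_eq_inner)
        have i2: "(norm ((- t) *\<^sub>R r))\<^sup>2 = t * t * q" using tp by (simp add: q_def power_mult_distrib power2_eq_square)
        have i3: "L / (2 * real N) * t = L / (2 * (L + 1))" using Np L0 by (simp add: t_def)
        have "L / (2 * real N) * (t * t * q) = (L / (2 * real N) * t) * t * q" by (simp only: mult.assoc)
        then show ?thesis unfolding i1 i2 i3 by (simp add: mult.commute mult.left_commute)
      qed
      finally have h: "0 \<le> - t * q + t * (L / (2 * (L + 1))) * q" .
      have "L / (2 * (L + 1)) \<le> 1 / 2" using L0 by (simp add: field_simps)
      then have "t * (L / (2 * (L + 1))) * q \<le> t * (1 / 2) * q"
        using tp q0 by (intro mult_right_mono mult_left_mono) auto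
      then have "t * q \<le> 0" using h by linarith
      then have "q \<le> 0" using tp by (simp add: mult_le_0_iff)
      then have "norm r = 0" unfolding q_def by simp
      then show ?thesis using eps'_pos by simp
    qed
    then show "norm (A *v yb - b) \<le> \<epsilon>'" by (simp add: r_def norm_minus_commute)
  qed
qed

end
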